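(* Let $P$ be a finite poset that has a unit mixed interval representation. Then $\dim(P) \le 3$.
   Context: Posets are finite and reflexive. A unit mixed interval representation of $P$ assigns to each element $x$ a real interval $I_x$ of length $1$ of one of the four forms $[a,a+1]$, $(a,a+1)$, $(a,a+1]$, $[a,a+1)$ (different forms may occur for different elements), such that for distinct $x,y$, $x<y$ in $P$ if and only if $I_x$ and $I_y$ are disjoint and every point of $I_x$ is less than every point of $I_y$. The dimension $\dim(P)$ is the minimum number of linear extensions of $P$ whose intersection is $P$ (i.e. $x<y$ in $P$ iff $x<y$ in each of them). *)

theory Defs
  imports "HOL-Analysis.Analysis"
begin

definition unit_interval :: "real \<Rightarrow> bool \<Rightarrow> bool \<Rightarrow> real set" where
  "unit_interval a cl cr =
     {t. (if cl then a \<le> t else a < t) \<and> (if cr then t \<le> a + 1 else t < a + 1)}"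

definition entirely_before :: "real set \<Rightarrow> real set \<Rightarrow> bool" where
  "entirely_before I J \<longleftrightarrow> I \<inter> J = {} \<and> (\<forall>s\<in>I. \<forall>t\<in>J. s < t)"

definition has_unit_mixed_interval_rep :: "'a set \<Rightarrow> 'a rel \<Rightarrow> bool" where
  "has_unit_mixed_interval_rep S r \<longleftrightarrow>
     (\<exists>(a :: 'a \<Rightarrow> real) (cl :: 'a \<Rightarrow> bool) (cr :: 'a \<Rightarrow> bool).
        \<forall>x\<in>S. \<forall>y\<in>S. x \<noteq> y \<longrightarrow>
          ((x, y) \<in> r \<longleftrightarrow>
             entirely_before (unit_interval (a x) (cl x) (cr x)) (unit_interval (a y) (cl y) (cr y))))"

definition linear_extension :: "'a set \<Rightarrow> 'a rel \<Rightarrow> 'a rel \<Rightarrow> bool" where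
  "linear_extension S r L \<longleftrightarrow> linear_order_on S L \<and> r \<subseteq> L"

definition order_dim :: "'a set \<Rightarrow> 'a rel \<Rightarrow> nat" where
  "order_dim S r = (LEAST n. \<exists>\<L>. \<L> \<noteq> {} \<and> finite \<L> \<and> card \<L> = n \<and>
       (\<forall>L\<in>\<L>. linear_extension S r L) \<and> \<Inter>\<L> = r)"

end

theory Submission imports Defs "HOL-Library.List_Lexorder" begin

definition rf :: "bool \<Rightarrow> int" where "rf c = (if c then 0 else -1)"
definition lf :: "bool \<Rightarrow> int" where "lf c = (if c then 0 else 1)"

definition kA :: "int \<Rightarrow> real \<Rightarrow> bool \<Rightarrow> bool \<Rightarrow> nat \<Rightarrow> real list" where
  "kA p a cl cr t = (let n = \<lfloor>a\<rfloor> + p in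
     [of_int (n div 2), if even n then a + 1 else a, of_int (if even n then rf cr else lf cl), if even n then 1 else 0, of_nat t])"

definition k3 :: "real \<Rightarrow> bool \<Rightarrow> bool \<Rightarrow> nat \<Rightarrow> real list" where
  "k3 a cl cr t = [of_int \<lfloor>a\<rfloor>, -a, - of_int (rf cr), - of_int (lf cl), - of_nat t]"

definition ltr :: "real \<Rightarrow> bool \<Rightarrow> real \<Rightarrow> bool \<Rightarrow> bool" where
  "ltr a cr b cl \<longleftrightarrow> a + 1 < b \<or> (a + 1 = b \<and> \<not> (cr \<and> cl))"

lemma div2_ge: "2 * j \<le> (m::int) \<Longrightarrow> j \<le> m div 2"
  by linarith
lemma div2_step: "(n::int) + 1 \<le> m \<Longrightarrow> n div 2 < m div 2 \<or> (n div 2 = m div 2 \<and> even n \<and> m = n + 1)"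
proof (cases "even n")
  case True
  then obtain k where k: "n = 2 * k" by (elim evenE)
  assume m: "n + 1 \<le> m"
  show ?thesis
  proof (cases "m = n + 1")
    case True thus ?thesis using k \<open>even n\<close> by simp
  next
    case False
    hence "2 * (k + 1) \<le> m" using m k by simp
    hence "k + 1 \<le> m div 2" by (rule div2_ge)
    thus ?thesis using k by simp
  qed
next
  case False
  then obtain k where k: "n = 2 * k + 1" by (elim oddE)
  assume m: "n + 1 \<le> m"
  hence "2 * (k + 1) \<le> m" using k by (simp add: algebra_simps)
  hence "k + 1 \<le> m div 2" by (rule div2_ge)
  thus ?thesis using k by simp
qed
lemma div2_succ: "even (n::int) \<Longrightarrow> (n + 1) div 2 = n div 2 \<and> odd (n + 1)"
  by (elim evenE) simp

lemma floor_step: "a + 1 \<le> b \<Longrightarrow> \<lfloor>(a::real)\<rfloor> + 1 \<le> \<lfloor>b\<rfloor>"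
  by (metis floor_add_int floor_mono of_int_1)

lemma keyA_lt:
  assumes "ltr ax crx ay cly"
  shows "kA p ax clx crx tx < kA p ay cly cry ty"
proof -
  define nx where "nx = \<lfloor>ax\<rfloor> + p"
  define ny where "ny = \<lfloor>ay\<rfloor> + p"
  have le: "ax + 1 \<le> ay" using assms by (auto simp: ltr_def)
  have "nx + 1 \<le> ny" using floor_step[OF le] unfolding nx_def ny_def by linarith
  hence c: "nx div 2 < ny div 2 \<or> (nx div 2 = ny div 2 \<and> even nx \<and> ny = nx + 1)" by (rule div2_step)
  have kx: "kA p ax clx crx tx = [of_int (nx div 2), if even nx then ax + 1 else ax,
      of_int (if even nx then rf crx else lf clx), if even nx then 1 else 0, of_nat tx]"
    by (simp add: kA_def Let_def nx_def)
  have ky: "kA p ay cly cry ty = [of_int (ny div 2), if even ny then ay + 1 else ay,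
      of_int (if even ny then rf cry else lf cly), if even ny then 1 else 0, of_nat ty]"
    by (simp add: kA_def Let_def ny_def)
  show ?thesis
  proof (cases "nx div 2 < ny div 2")
    case True thus ?thesis unfolding kx ky by simp
  next
    case False
    with c have e0: "nx div 2 = ny div 2" "even nx" "ny = nx + 1" by blast+
    have e1: "odd ny" using e0(2,3) by simp
    note e = e0(1,2) e1
    have "ax + 1 < ay \<or> (ax + 1 = ay \<and> rf crx < lf cly)"
      using assms by (auto simp: ltr_def rf_def lf_def)
    thus ?thesis unfolding kx ky using e by auto
  qed
qed

lemma key3_lt:
  assumes "ltr ax crx ay cly"
  shows "k3 ax clx crx tx < k3 ay cly cry ty"
proof -
  have le: "ax + 1 \<le> ay" using assms by (auto simp: ltr_def)
  show ?thesis using floor_step[OF le] by (simp add: k3_def)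
qed

lemma key_rev:
  assumes "\<not> ltr ax crx ay cly" "tx \<noteq> ty"
  shows "kA 0 ay cly cry ty < kA 0 ax clx crx tx \<or> kA 1 ay cly cry ty < kA 1 ax clx crx tx
     \<or> k3 ay cly cry ty < k3 ax clx crx tx"
proof -
  define nx where "nx = \<lfloor>ax\<rfloor>"
  define ny where "ny = \<lfloor>ay\<rfloor>"
  have bx: "of_int nx \<le> ax" "ax < of_int nx + 1" unfolding nx_def by linarith+
  have by': "of_int ny \<le> ay" "ay < of_int ny + 1" unfolding ny_def by linarith+
  have le: "ay \<le> ax + 1" using assms by (auto simp: ltr_def)
  have eqc: "ay = ax + 1 \<Longrightarrow> crx \<and> cly" using assms by (auto simp: ltr_def)
  have "ny \<le> nx + 1" using bx by' le by (smt (verit) of_int_add of_int_less_iff of_int_1)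
  then consider "ny < nx" | "ny = nx" | "ny = nx + 1" by linarith
  thus ?thesis
  proof cases
    case 1 thus ?thesis by (simp add: k3_def nx_def[symmetric] ny_def[symmetric])
  next
    case 2
    note eqn = 2
    consider "ay > ax" | "ay < ax" | "ay = ax" by linarith
    thus ?thesis
    proof cases
      case 1 thus ?thesis using eqn by (simp add: k3_def nx_def[symmetric] ny_def[symmetric])
    next
      case 2
      have kx: "kA 0 ax clx crx tx = [of_int (nx div 2), if even nx then ax + 1 else ax,
          of_int (if even nx then rf crx else lf clx), if even nx then 1 else 0, of_nat tx]"
        by (simp add: kA_def Let_def nx_def)
      have ky: "kA 0 ay cly cry ty = [of_int (nx div 2), if even nx then ay + 1 else ay,
          of_int (if even nx then rf cry else lf cly), if even nx then 1 else 0, of_nat ty]"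
        using eqn by (simp add: kA_def Let_def ny_def[symmetric])
      have "kA 0 ay cly cry ty < kA 0 ax clx crx tx"
        unfolding kx ky using 2 by (cases "even nx") simp_all
      thus ?thesis by blast
    next
      case 3
      have g: "(rf cry < rf crx \<or> rf cry = rf crx \<and> ty < tx) \<or> (lf cly < lf clx \<or> lf cly = lf clx \<and> ty < tx)
         \<or> (rf crx < rf cry \<or> rf crx = rf cry \<and> (lf clx < lf cly \<or> lf clx = lf cly \<and> tx < ty))"
        using assms(2) by linarith
      have kx0: "kA 0 ax clx crx tx = [of_int (nx div 2), if even nx then ax + 1 else ax,
          of_int (if even nx then rf crx else lf clx), if even nx then 1 else 0, of_nat tx]"
        by (simp add: kA_def Let_def nx_def)
      have ky0: "kA 0 ay cly cry ty = [of_int (nx div 2), if even nx then ax + 1 else ax,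
          of_int (if even nx then rf cry else lf cly), if even nx then 1 else 0, of_nat ty]"
        unfolding 3 by (simp add: kA_def Let_def nx_def)
      have kx1: "kA 1 ax clx crx tx = [of_int ((nx + 1) div 2), if even (nx + 1) then ax + 1 else ax,
          of_int (if even (nx + 1) then rf crx else lf clx), if even (nx + 1) then 1 else 0, of_nat tx]"
        by (simp only: kA_def Let_def nx_def)
      have ky1: "kA 1 ay cly cry ty = [of_int ((nx + 1) div 2), if even (nx + 1) then ax + 1 else ax,
          of_int (if even (nx + 1) then rf cry else lf cly), if even (nx + 1) then 1 else 0, of_nat ty]"
        unfolding 3 by (simp only: kA_def Let_def nx_def)
      have e1: "kA 0 ay cly cry ty < kA 0 ax clx crx tx \<longleftrightarrow> (if even nx then (rf cry < rf crx \<or> rf cry = rf crx \<and> ty < tx) else (lf cly < lf clx \<or> lf cly = lf clx \<and> ty < tx))"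
        unfolding kx0 ky0 by (cases "even nx") simp_all
      have e2: "kA 1 ay cly cry ty < kA 1 ax clx crx tx \<longleftrightarrow> (if odd nx then (rf cry < rf crx \<or> rf cry = rf crx \<and> ty < tx) else (lf cly < lf clx \<or> lf cly = lf clx \<and> ty < tx))"
        unfolding kx1 ky1 by (cases "even nx") simp_all
      have e3: "k3 ay cly cry ty < k3 ax clx crx tx \<longleftrightarrow> (rf crx < rf cry \<or> rf crx = rf cry \<and> (lf clx < lf cly \<or> lf clx = lf cly \<and> tx < ty))"
        using eqn 3 by (auto simp: k3_def nx_def[symmetric] ny_def[symmetric])
      show ?thesis
      proof (cases "even nx")
        case True thus ?thesis using g e1 e2 e3 by auto
      next
        case False thus ?thesis using g e1 e2 e3 by auto
      qed
    qed
  next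
    case 3
    show ?thesis
    proof (cases "even nx")
      case True
      have d: "ny div 2 = nx div 2" "odd ny" unfolding 3 using div2_succ[OF True] by blast+
      have kx: "kA 0 ax clx crx tx = [of_int (nx div 2), ax+1, of_int (rf crx), 1, of_nat tx]"
        using True by (simp add: kA_def Let_def nx_def)
      have ky: "kA 0 ay cly cry ty = [of_int (nx div 2), ay, of_int (lf cly), 0, of_nat ty]"
        using d by (simp add: kA_def Let_def ny_def[symmetric])
      have "kA 0 ay cly cry ty < kA 0 ax clx crx tx"
        unfolding kx ky using le eqc by (cases "ay = ax + 1") (auto simp: rf_def lf_def)
      thus ?thesis by blast
    next
      case False
      have ev: "even (nx + 1)" using False by simp
      have d: "(ny + 1) div 2 = (nx + 1) div 2" "odd (ny + 1)" "even (nx + 1)"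
        unfolding 3 using div2_succ[OF ev] ev by blast+
      have kx: "kA 1 ax clx crx tx = [of_int ((nx + 1) div 2), ax+1, of_int (rf crx), 1, of_nat tx]"
        using d by (simp add: kA_def Let_def nx_def[symmetric])
      have ky: "kA 1 ay cly cry ty = [of_int ((nx + 1) div 2), ay, of_int (lf cly), 0, of_nat ty]"
        using d by (simp add: kA_def Let_def ny_def[symmetric])
      have "kA 1 ay cly cry ty < kA 1 ax clx crx tx"
        unfolding kx ky using le eqc by (cases "ay = ax + 1") (auto simp: rf_def lf_def)
      thus ?thesis by blast
    qed
  qed
qed

lemma ui_mem: "t \<in> unit_interval a cl cr \<Longrightarrow> a \<le> t \<and> t \<le> a + 1 \<and> (\<not> cl \<longrightarrow> a < t) \<and> (\<not> cr \<longrightarrow> t < a + 1)"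
  by (auto simp: unit_interval_def split: if_splits)

lemma ui_int: "a < t \<Longrightarrow> t < a + 1 \<Longrightarrow> t \<in> unit_interval a cl cr"
  by (auto simp: unit_interval_def)

lemma eb_iff: "entirely_before (unit_interval a cl cr) (unit_interval b dl dr) \<longleftrightarrow> ltr a cr b dl"
proof
  assume L: "entirely_before (unit_interval a cl cr) (unit_interval b dl dr)"
  hence lt: "\<And>s t. s \<in> unit_interval a cl cr \<Longrightarrow> t \<in> unit_interval b dl dr \<Longrightarrow> s < t"
    by (auto simp: entirely_before_def)
  show "ltr a cr b dl"
  proof (rule ccontr)
    assume N: "\<not> ltr a cr b dl"
    hence "b < a + 1 \<or> (b = a + 1 \<and> cr \<and> dl)" by (auto simp: ltr_def)
    thus False
    proof
      assume h: "b < a + 1"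
      show False
      proof (cases "b \<le> a")
        case True
        have "a + 1/2 \<in> unit_interval a cl cr" "b + 1/2 \<in> unit_interval b dl dr"
          by (auto intro!: ui_int)
        with lt[of "a + 1/2" "b + 1/2"] True show False by linarith
      next
        case False
        have "(b + a + 1)/2 \<in> unit_interval a cl cr" "(b + a + 1)/2 \<in> unit_interval b dl dr"
          using False h by (auto intro!: ui_int)
        with lt show False by fastforce
      qed
    next
      assume h: "b = a + 1 \<and> cr \<and> dl"
      hence "a + 1 \<in> unit_interval a cl cr" "a + 1 \<in> unit_interval b dl dr"
        by (auto simp: unit_interval_def)
      with lt show False by fastforce
    qed
  qed
next
  assume R: "ltr a cr b dl"
  have "\<forall>s\<in>unit_interval a cl cr. \<forall>t\<in>unit_interval b dl dr. s < t"
  proof (intro ballI)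
    fix s t assume s: "s \<in> unit_interval a cl cr" and t: "t \<in> unit_interval b dl dr"
    from ui_mem[OF s] ui_mem[OF t] R show "s < t" by (auto simp: ltr_def)
  qed
  thus "entirely_before (unit_interval a cl cr) (unit_interval b dl dr)"
    by (auto simp: entirely_before_def)
qed

lemma linord_key:
  fixes k :: "'a \<Rightarrow> 'b::linorder"
  assumes "inj_on k S"
  shows "linear_order_on S {(x,y). x \<in> S \<and> y \<in> S \<and> k x \<le> k y}"
  using assms
  unfolding linear_order_on_def partial_order_on_def preorder_on_def refl_on_def trans_on_def
    antisym_on_def total_on_def
  by (auto dest: inj_onD)

theorem mainTheorem4:
  fixes S :: "'a set" and r :: "'a rel"
  assumes "finite S"
    and "partial_order_on S r"
    and "has_unit_mixed_interval_rep S r"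
  shows "order_dim S r \<le> 3"
proof -
  obtain a cl cr where rep: "\<And>x y. x \<in> S \<Longrightarrow> y \<in> S \<Longrightarrow> x \<noteq> y \<Longrightarrow>
      (x, y) \<in> r \<longleftrightarrow> ltr (a x) (cr x) (a y) (cl y)"
    using assms(3) unfolding has_unit_mixed_interval_rep_def by (auto simp: eb_iff)
  obtain f :: "'a \<Rightarrow> nat" and N where f: "f ` S = {i. i < N}" "inj_on f S"
    using finite_imp_inj_to_nat_seg[OF assms(1)] by blast
  have rS: "r \<subseteq> S \<times> S" and rrefl: "\<And>x. x \<in> S \<Longrightarrow> (x, x) \<in> r"
    using assms(2) by (auto simp: partial_order_on_def preorder_on_def refl_on_def)
  define k1 where "k1 x = kA 0 (a x) (cl x) (cr x) (f x)" for x
  define k2 where "k2 x = kA 1 (a x) (cl x) (cr x) (f x)" for x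
  define k3' where "k3' x = k3 (a x) (cl x) (cr x) (f x)" for x
  have inj1: "inj_on k1 S" using f(2) by (auto simp: inj_on_def k1_def kA_def Let_def)
  have inj2: "inj_on k2 S" using f(2) by (auto simp: inj_on_def k2_def kA_def Let_def)
  have inj3: "inj_on k3' S" using f(2) by (auto simp: inj_on_def k3'_def k3_def)
  define L1 where "L1 = {(x,y). x \<in> S \<and> y \<in> S \<and> k1 x \<le> k1 y}"
  define L2 where "L2 = {(x,y). x \<in> S \<and> y \<in> S \<and> k2 x \<le> k2 y}"
  define L3 where "L3 = {(x,y). x \<in> S \<and> y \<in> S \<and> k3' x \<le> k3' y}"
  have lt_of_r: "ltr (a x) (cr x) (a y) (cl y)" if "(x, y) \<in> r" "x \<noteq> y" for x y
    using rep that rS by blast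
  have sub: "r \<subseteq> L" if "L \<in> {L1, L2, L3}" for L
  proof
    fix p assume p: "p \<in> r"
    obtain x y where xy: "p = (x, y)" by (cases p)
    have S: "x \<in> S" "y \<in> S" using p xy rS by auto
    show "p \<in> L"
    proof (cases "x = y")
      case True thus ?thesis using that S xy by (auto simp: L1_def L2_def L3_def)
    next
      case False
      hence l: "ltr (a x) (cr x) (a y) (cl y)" using lt_of_r p xy by blast
      show ?thesis using that S xy
        keyA_lt[OF l, of 0 "cl x" "f x" "cr y" "f y"] keyA_lt[OF l, of 1 "cl x" "f x" "cr y" "f y"]
        key3_lt[OF l, of "cl x" "f x" "cr y" "f y"]
        by (auto simp: L1_def L2_def L3_def k1_def k2_def k3'_def)
    qed
  qed
  have lin: "linear_extension S r L" if "L \<in> {L1, L2, L3}" for L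
    using sub[OF that] that linord_key[OF inj1] linord_key[OF inj2] linord_key[OF inj3]
    by (auto simp: linear_extension_def L1_def L2_def L3_def)
  have inter: "\<Inter>{L1, L2, L3} = r"
  proof
    show "r \<subseteq> \<Inter>{L1, L2, L3}" using sub by blast
  next
    show "\<Inter>{L1, L2, L3} \<subseteq> r"
    proof
      fix p assume p: "p \<in> \<Inter>{L1, L2, L3}"
      obtain x y where xy: "p = (x, y)" by (cases p)
      have S: "x \<in> S" "y \<in> S" using p xy by (auto simp: L1_def)
      show "p \<in> r"
      proof (cases "x = y")
        case True thus ?thesis using rrefl S xy by auto
      next
        case False
        show ?thesis
        proof (rule ccontr)
          assume "p \<notin> r"
          hence nl: "\<not> ltr (a x) (cr x) (a y) (cl y)" using rep[OF S False] xy by auto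
          have "f x \<noteq> f y" using False f(2) S by (auto dest: inj_onD)
          from key_rev[OF nl this, of "cr y" "cl x"]
          have "k1 y < k1 x \<or> k2 y < k2 x \<or> k3' y < k3' x"
            by (simp add: k1_def k2_def k3'_def)
          thus False using p xy by (auto simp: L1_def L2_def L3_def)
        qed
      qed
    qed
  qed
  have ex: "\<exists>\<L>. \<L> \<noteq> {} \<and> finite \<L> \<and> card \<L> = card {L1, L2, L3} \<and>
       (\<forall>L\<in>\<L>. linear_extension S r L) \<and> \<Inter>\<L> = r"
    by (rule exI[of _ "{L1, L2, L3}"]) (use lin inter in auto)
  have "order_dim S r \<le> card {L1, L2, L3}"
    unfolding order_dim_def by (rule Least_le) (rule ex)
  also have "\<dots> \<le> 3" by (simp add: card_insert_if)
  finally show ?thesis .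
qed
end
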